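(* Let $l\ge2$ and $a,b\in\mathbb{Z}_{2l}$ be such that $X=X(\mathbb{Z}_{2l},\{\pm a,\pm b\})$ is a $4$-regular circulant graph, and assume $a+b=l$ with $l\not\equiv0\pmod 4$. (i) If $l\equiv2\pmod4$, then $X$ admits perfect state transfer from $d^*e_x$ to $d^*e_{x+l}$ at time $l$, for every $x\in\mathbb{Z}_{2l}$. (ii) If $l$ is odd, then $X$ admits perfect state transfer from $d^*e_x$ to $d^*e_{x+l}$ at time $2l$, for every $x\in\mathbb{Z}_{2l}$. Moreover, if $X$ is connected, then these times are the minimum times at which perfect state transfer from $d^*e_x$ to $d^*e_{x+l}$ occurs.
   Context: For $S\subseteq\mathbb{Z}_n\setminus\{0\}$ with $S=-S$, $X(\mathbb{Z}_n,S)$ has vertex set $\mathbb{Z}_n$ and edges $\{x,y\}$ with $y-x\in S$. For a graph with symmetric arc set $\mathcal{A}$ ($t((x,y))=y$, $(x,y)^{-1}=(y,x)$): boundary matrix $d_{x,a}=\frac{1}{\sqrt{\deg x}}\delta_{x,t(a)}$, shift matrix $R_{a,b}=\delta_{a,b^{-1}}$, $U=R(2d^*d-I_{\mathcal{A}})$; $e_x$ is the standard unit vector. Perfect state transfer from $\Phi$ to a distinct state $\Psi$ at time $\tau\in\mathbb{Z}_{\ge1}$ means $U^\tau\Phi=\gamma\Psi$ for some $|\gamma|=1$. *)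

theory Defs
  imports Complex_Main
begin

text \<open>A graph is given by a vertex set V and a symmetric arc set A of pairs (x,y);
  t((x,y)) = y and (x,y)^{-1} = (y,x). Vectors in C^A are functions on pairs
  (vanishing outside A).\<close>

definition arc_deg :: "('v \<times> 'v) set \<Rightarrow> 'v \<Rightarrow> nat" where
  "arc_deg A x = card {e \<in> A. snd e = x}"

definition bd :: "('v \<times> 'v) set \<Rightarrow> 'v \<Rightarrow> 'v \<times> 'v \<Rightarrow> complex" where
  "bd A x e = (if e \<in> A \<and> snd e = x
                then complex_of_real (1 / sqrt (real (arc_deg A x))) else 0)"

definition dstar_e :: "('v \<times> 'v) set \<Rightarrow> 'v \<Rightarrow> ('v \<times> 'v \<Rightarrow> complex)" where
  "dstar_e A x = (\<lambda>e. cnj (bd A x e))"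

text \<open>U = R (2 d^* d - I), acting on vectors indexed by arcs.\<close>
definition walk_U :: "('v \<times> 'v) set \<Rightarrow> 'v set \<Rightarrow> ('v \<times> 'v \<Rightarrow> complex) \<Rightarrow> ('v \<times> 'v \<Rightarrow> complex)" where
  "walk_U A V \<phi> = (\<lambda>e. if e \<in> A then
      (let f = prod.swap e in
        2 * (\<Sum>x\<in>V. cnj (bd A x f) * (\<Sum>g\<in>A. bd A x g * \<phi> g)) - \<phi> f)
     else 0)"

definition pst :: "('v \<times> 'v) set \<Rightarrow> 'v set \<Rightarrow> ('v \<times> 'v \<Rightarrow> complex) \<Rightarrow> ('v \<times> 'v \<Rightarrow> complex) \<Rightarrow> nat \<Rightarrow> bool" where
  "pst A V \<Phi> \<Psi> \<tau> \<longleftrightarrow> \<Phi> \<noteq> \<Psi> \<and> \<tau> \<ge> 1 \<and>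
     (\<exists>\<gamma>. cmod \<gamma> = 1 \<and> (walk_U A V ^^ \<tau>) \<Phi> = (\<lambda>e. \<gamma> * \<Psi> e))"

text \<open>Circulant graph X(Z_n, S): vertices 0..n-1, S a set of residues in {0..n-1}.\<close>
definition circ_arcs :: "nat \<Rightarrow> int set \<Rightarrow> (nat \<times> nat) set" where
  "circ_arcs n S = {(x, y). x < n \<and> y < n \<and> (int y - int x) mod int n \<in> S}"

definition graph_connected :: "('v \<times> 'v) set \<Rightarrow> 'v set \<Rightarrow> bool" where
  "graph_connected A V \<longleftrightarrow> (\<forall>x\<in>V. \<forall>y\<in>V. (x, y) \<in> A\<^sup>*)"

end

theory Submission
  imports Defs
begin

lemma card4_distinct:
  assumes "card {p,q,r,s::'a} = 4"
  shows "p \<noteq> q \<and> p \<noteq> r \<and> p \<noteq> s \<and> q \<noteq> r \<and> q \<noteq> s \<and> r \<noteq> s"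
  using assms by (auto simp: card_insert_if split: if_splits)

lemma dvd_comb: "(L::int) dvd p \<Longrightarrow> L dvd q \<Longrightarrow> r = p + q \<Longrightarrow> L dvd r"
  by simp
lemma dvd_comb2: "(L::int) dvd p \<Longrightarrow> L dvd q \<Longrightarrow> r = p - q \<Longrightarrow> L dvd r"
  by simp

lemma mod_dvd: "(N::int) dvd (p mod N - p)"
proof -
  have "p mod N - p = N * (- (p div N))" using div_mult_mod_eq[of p N] by (simp add: algebra_simps)
  then show ?thesis by simp
qed

lemma lin_add: "walk_U A V (\<lambda>e. f e + g e) = (\<lambda>e. walk_U A V f e + walk_U A V g e)"
  unfolding walk_U_def Let_def
  by (rule ext) (simp add: sum.distrib distrib_left algebra_simps)

lemma lin_scale: "walk_U A V (\<lambda>e. c * f e) = (\<lambda>e. c * walk_U A V f e)"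
  unfolding walk_U_def Let_def
  by (rule ext) (simp add: sum_distrib_left algebra_simps)

locale W =
  fixes l :: nat and a b :: int and S :: "int set" and A :: "(nat \<times> nat) set"
  assumes S_def: "S = (\<lambda>t. t mod int (2*l)) ` {a, - a, b, - b}"
  and A_def: "A = circ_arcs (2*l) S"
  and l2: "l \<ge> 2" and card4: "card S = 4" and zS: "0 \<notin> S"
  and ab: "(a+b) mod int (2*l) = int l"
begin

lemma S_eq: "S = {a mod (2*int l), (-a) mod (2*int l), b mod (2*int l), (-b) mod (2*int l)}"
  using S_def by simp

lemma Sdist: "a mod (2*int l) \<noteq> (-a) mod (2*int l)" "a mod (2*int l) \<noteq> b mod (2*int l)"
  "a mod (2*int l) \<noteq> (-b) mod (2*int l)" "(-a) mod (2*int l) \<noteq> b mod (2*int l)"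
  "(-a) mod (2*int l) \<noteq> (-b) mod (2*int l)" "b mod (2*int l) \<noteq> (-b) mod (2*int l)"
  using card4_distinct[OF card4[unfolded S_eq]] by auto

lemma ab': "(2*int l) dvd (a + b - int l)"
proof -
  have "int l mod (2*int l) = int l" using l2 by simp
  then have "(a+b) mod (2*int l) = int l mod (2*int l)" using ab by simp
  then show ?thesis using mod_eq_dvd_iff[of "a+b" "2*int l" "int l"] by simp
qed

lemma not_dvd2a: "\<not> int l dvd 2*a"
proof
  assume "int l dvd 2*a"
  then obtain k where k: "2*a = int l * k" by (auto simp: dvd_def)
  show False
  proof (cases "even k")
    case True
    then obtain j where "k = 2*j" by auto
    with k have "a - (-a) = (2*int l) * j" by simp
    then have "(2*int l) dvd (a - (-a))" by simp
    then have "a mod (2*int l) = (-a) mod (2*int l)" using mod_eq_dvd_iff[of a "2*int l" "-a"] by blast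
    with Sdist show False by simp
  next
    case False
    then obtain j where "k = 2*j+1" using oddE by blast
    with k have e: "2*a - int l = (2*int l) * j" by (simp add: algebra_simps)
    have "(2*int l) dvd (2*a - int l) - (a + b - int l)"
      using ab' e by (metis dvd_diff dvd_triv_left)
    moreover have "(2*a - int l) - (a + b - int l) = a - b" by simp
    ultimately have "a mod (2*int l) = b mod (2*int l)" using mod_eq_dvd_iff[of a "2*int l" b] by simp
    with Sdist show False by simp
  qed
qed

lemma S_bounds: "s \<in> S \<Longrightarrow> 0 \<le> s \<and> s < 2*int l"
  using l2 by (auto simp: S_eq)

lemma A_iff: "(u,v) \<in> A \<longleftrightarrow> u < 2*l \<and> v < 2*l \<and> (int v - int u) mod (2*int l) \<in> S"
  by (simp add: A_def circ_arcs_def)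

lemma S_neg: "s \<in> S \<Longrightarrow> (-s) mod (2*int l) \<in> S"
  by (auto simp: S_eq mod_minus_eq)

lemma A_sym: "(u,v) \<in> A \<Longrightarrow> (v,u) \<in> A"
proof -
  assume "(u,v) \<in> A"
  then have "u < 2*l" "v < 2*l" "(int v - int u) mod (2*int l) \<in> S" by (auto simp: A_iff)
  moreover have "(- ((int v - int u) mod (2*int l))) mod (2*int l) = (int u - int v) mod (2*int l)"
    by (simp add: mod_minus_eq)
  ultimately show ?thesis using S_neg A_iff by metis
qed

lemma S_cases: "s \<in> S \<Longrightarrow> (2*int l) dvd (s - a) \<or> (2*int l) dvd (s + a) \<or> (2*int l) dvd (s - b) \<or> (2*int l) dvd (s + b)"
proof -
  assume "s \<in> S"
  then consider "s = a mod (2*int l)" | "s = (-a) mod (2*int l)" | "s = b mod (2*int l)" | "s = (-b) mod (2*int l)"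
    by (auto simp: S_eq)
  then show ?thesis
  proof cases
    case 1 then show ?thesis using mod_dvd[of "2*int l" a] by simp
  next
    case 2 then show ?thesis using mod_dvd[of "2*int l" "-a"] by simp
  next
    case 3 then show ?thesis using mod_dvd[of "2*int l" b] by simp
  next
    case 4 then show ?thesis using mod_dvd[of "2*int l" "-b"] by simp
  qed
qed

lemma S_modL: "s \<in> S \<Longrightarrow> int l dvd (s - a) \<or> int l dvd (s + a)"
proof -
  assume "s \<in> S"
  have Lb: "int l dvd (a + b - int l)" using ab' by (meson dvd_mult_right)
  have NL: "int l dvd (2*int l)" by simp
  from S_cases[OF \<open>s \<in> S\<close>] show ?thesis
  proof (elim disjE)
    assume "(2*int l) dvd (s - a)" then show ?thesis using NL dvd_trans by blast
  next
    assume "(2*int l) dvd (s + a)" then show ?thesis using NL dvd_trans by blast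
  next
    assume "(2*int l) dvd (s - b)"
    then have "int l dvd (s - b)" using NL dvd_trans by blast
    moreover have "s + a = (s - b) + (a + b - int l) + int l" by simp
    ultimately have "int l dvd (s + a)" using Lb by (metis dvd_add dvd_refl)
    then show ?thesis by simp
  next
    assume "(2*int l) dvd (s + b)"
    then have "int l dvd (s + b)" using NL dvd_trans by blast
    moreover have "s - a = (s + b) - (a + b - int l) - int l" by simp
    ultimately have "int l dvd (s - a)" using Lb by (metis dvd_diff dvd_refl)
    then show ?thesis by simp
  qed
qed

lemma excl: "int l dvd (p - a) \<Longrightarrow> int l dvd (p + a) \<Longrightarrow> False"
proof -
  assume "int l dvd (p - a)" "int l dvd (p + a)"
  then have "int l dvd (p + a) - (p - a)" by (rule dvd_diff[rotated])
  then show False using not_dvd2a by simp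
qed

lemma dvd_shift: "(2*int l) dvd (p - q) \<Longrightarrow> int l dvd (p + c) \<longleftrightarrow> int l dvd (q + c)"
proof -
  assume "(2*int l) dvd (p - q)"
  then have d: "int l dvd (p - q)" by (meson dvd_mult_right)
  have "p + c = (p - q) + (q + c)" by simp
  then show ?thesis using d by (metis dvd_add_right_iff)
qed

lemma arc_diff: "(u,v) \<in> A \<Longrightarrow> (int l dvd (int v - int u - a)) \<noteq> (int l dvd (int v - int u + a))"
proof -
  assume "(u,v) \<in> A"
  then have s: "(int v - int u) mod (2*int l) \<in> S" by (simp add: A_iff)
  have m: "(2*int l) dvd ((int v - int u) mod (2*int l) - (int v - int u))" by (rule mod_dvd)
  show ?thesis using S_modL[OF s] excl dvd_shift[OF m, of "-a"] dvd_shift[OF m, of a] by auto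
qed

definition src :: "nat \<Rightarrow> int \<Rightarrow> nat" where
  "src u s = nat ((int u - s) mod (2*int l))"

lemma Npos: "2 * int l > 0" using l2 by simp

lemma src_int: "int (src u s) = (int u - s) mod (2*int l)"
  using Npos by (simp add: src_def)

lemma src_lt: "src u s < 2*l"
proof -
  have "(int u - s) mod (2*int l) < 2 * int l" using Npos by simp
  then have "int (src u s) < int (2*l)" using src_int by simp
  then show ?thesis by linarith
qed

lemma src_back: "s \<in> S \<Longrightarrow> (int u - int (src u s)) mod (2*int l) = s"
proof -
  assume "s \<in> S"
  have "(int u - int (src u s)) mod (2*int l) = (int u - (int u - s)) mod (2*int l)"
    unfolding src_int by (simp add: mod_diff_right_eq)
  also have "\<dots> = s mod (2*int l)" by simp
  also have "\<dots> = s" using S_bounds[OF \<open>s \<in> S\<close>] by simp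
  finally show ?thesis .
qed

lemma arc_in: "s \<in> S \<Longrightarrow> u < 2*l \<Longrightarrow> (src u s, u) \<in> A"
  using src_back src_lt A_iff by simp

lemma In_eq: "u < 2*l \<Longrightarrow> {g \<in> A. snd g = u} = (\<lambda>s. (src u s, u)) ` S"
proof (intro equalityI subsetI)
  fix g assume u: "u < 2*l" and g: "g \<in> {g \<in> A. snd g = u}"
  then obtain w where gw: "g = (w,u)" and wA: "(w,u) \<in> A" by (cases g) auto
  then have s: "(int u - int w) mod (2*int l) \<in> S" and w: "w < 2*l" by (auto simp: A_iff)
  have "int (src u ((int u - int w) mod (2*int l))) = (int u - (int u - int w)) mod (2*int l)"
    unfolding src_int by (simp add: mod_diff_right_eq)
  also have "\<dots> = int w" using w by simp
  finally have "src u ((int u - int w) mod (2*int l)) = w" by simp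
  then show "g \<in> (\<lambda>s. (src u s, u)) ` S" using s gw by force
next
  fix g assume u: "u < 2*l" and "g \<in> (\<lambda>s. (src u s, u)) ` S"
  then show "g \<in> {g \<in> A. snd g = u}" using arc_in by auto
qed

lemma inj_src: "inj_on (\<lambda>s. (src u s, u)) S"
proof (rule inj_onI)
  fix s t assume "s \<in> S" "t \<in> S" "(src u s, u) = (src u t, u)"
  then have "src u s = src u t" by simp
  then show "s = t" using src_back[of s u] src_back[of t u] \<open>s \<in> S\<close> \<open>t \<in> S\<close> by metis
qed

lemma finA: "finite A"
proof -
  have "A \<subseteq> {..<2*l} \<times> {..<2*l}" by (auto simp: A_iff)
  then show ?thesis by (rule finite_subset) simp
qed

lemma finS: "finite S" by (simp add: S_eq)

lemma deg4: "u < 2*l \<Longrightarrow> arc_deg A u = 4"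
  unfolding arc_deg_def using In_eq card_image[OF inj_src] card4 by simp

lemma sum_In: "u < 2*l \<Longrightarrow> (\<Sum>g\<in>{g \<in> A. snd g = u}. h g) = (\<Sum>s\<in>S. h (src u s, u))"
  using In_eq sum.reindex[OF inj_src, of h] by (simp add: comp_def)


lemma bd_eq: "x < 2*l \<Longrightarrow> bd A x g = (if g \<in> A \<and> snd g = x then 1/2 else 0)"
  using deg4 by (simp add: bd_def)

lemma U_formula:
  "walk_U A {..<2*l} \<phi> e = (if e \<in> A then (1/2) * (\<Sum>s\<in>S. \<phi> (src (fst e) s, fst e)) - \<phi> (snd e, fst e) else 0)"
proof (cases "e \<in> A")
  case False then show ?thesis by (simp add: walk_U_def)
next
  case True
  obtain u v where e: "e = (u,v)" by (cases e)
  with True have uv: "(u,v) \<in> A" by simp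
  then have vu: "(v,u) \<in> A" by (rule A_sym)
  have u: "u < 2*l" using uv by (simp add: A_iff)
  have inner: "(\<Sum>g\<in>A. bd A u g * \<phi> g) = (1/2) * (\<Sum>s\<in>S. \<phi> (src u s, u))"
  proof -
    have "(\<Sum>g\<in>A. bd A u g * \<phi> g) = (\<Sum>g\<in>A. if snd g = u then (1/2) * \<phi> g else 0)"
      using u by (intro sum.cong) (auto simp: bd_eq)
    also have "\<dots> = (\<Sum>g\<in>{g \<in> A. snd g = u}. (1/2) * \<phi> g)"
      by (rule sum.inter_filter[OF finA, symmetric])
    also have "\<dots> = (1/2) * (\<Sum>g\<in>{g \<in> A. snd g = u}. \<phi> g)"
      by (simp add: sum_distrib_left)
    also have "\<dots> = (1/2) * (\<Sum>s\<in>S. \<phi> (src u s, u))" using sum_In[OF u] by simp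
    finally show ?thesis .
  qed
  have "(\<Sum>x\<in>{..<2*l}. cnj (bd A x (v,u)) * (\<Sum>g\<in>A. bd A x g * \<phi> g))
      = (\<Sum>x\<in>{..<2*l}. if x = u then (1/2) * (\<Sum>g\<in>A. bd A u g * \<phi> g) else 0)"
    using vu by (intro sum.cong refl) (simp add: bd_eq)
  also have "\<dots> = (1/2) * (\<Sum>g\<in>A. bd A u g * \<phi> g)" using u by (simp add: sum.delta)
  finally have "(\<Sum>x\<in>{..<2*l}. cnj (bd A x (v,u)) * (\<Sum>g\<in>A. bd A x g * \<phi> g))
      = (1/4) * (\<Sum>s\<in>S. \<phi> (src u s, u))" using inner by simp
  moreover have "walk_U A {..<2*l} \<phi> (u,v) = 2 * (\<Sum>x\<in>{..<2*l}. cnj (bd A x (v,u)) * (\<Sum>g\<in>A. bd A x g * \<phi> g)) - \<phi> (v,u)"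
    using uv unfolding walk_U_def Let_def by simp
  ultimately show ?thesis using uv e by (simp add: mult.commute)
qed

lemma sumS4: "(\<Sum>s\<in>S. k s) = k (a mod (2*int l)) + k ((-a) mod (2*int l)) + k (b mod (2*int l)) + k ((-b) mod (2*int l))"
  unfolding S_eq using Sdist finS by (simp add: add.assoc)


definition Pst :: "int \<Rightarrow> int \<Rightarrow> nat \<times> nat \<Rightarrow> complex" where
  "Pst c s e = (if e \<in> A \<and> int l dvd (int (snd e) - c) \<and> int l dvd (int (snd e) - int (fst e) - s) then 1/4 else 0)"

lemma modfacts:
  "int l dvd (a mod (2*int l) - a)" "int l dvd ((-a) mod (2*int l) + a)"
  "int l dvd (b mod (2*int l) + a)" "int l dvd ((-b) mod (2*int l) - a)"
proof -
  have NL: "int l dvd (2*int l)" by simp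
  have Lb: "int l dvd (a + b - int l)" using ab' by (meson dvd_mult_right)
  show "int l dvd (a mod (2*int l) - a)" using mod_dvd[of "2*int l" a] NL dvd_trans by blast
  have "int l dvd ((-a) mod (2*int l) - (-a))" using mod_dvd[of "2*int l" "-a"] NL dvd_trans by blast
  then show "int l dvd ((-a) mod (2*int l) + a)" by simp
  have 1: "int l dvd (b mod (2*int l) - b)" using mod_dvd[of "2*int l" b] NL dvd_trans by blast
  have "b mod (2*int l) + a = (b mod (2*int l) - b) + (a + b - int l) + int l" by simp
  then show "int l dvd (b mod (2*int l) + a)" using 1 Lb by (metis dvd_add dvd_refl)
  have 2: "int l dvd ((-b) mod (2*int l) - (-b))" using mod_dvd[of "2*int l" "-b"] NL dvd_trans by blast
  have "(-b) mod (2*int l) - a = ((-b) mod (2*int l) - (-b)) - (a + b - int l) - int l" by simp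
  then show "int l dvd ((-b) mod (2*int l) - a)" using 2 Lb by (metis dvd_diff dvd_refl)
qed

lemma cnt: assumes "s = a \<or> s = -a"
  shows "(\<Sum>t\<in>S. if int l dvd (t - s) then (1::complex) else 0) = 2"
proof -
  note m = modfacts
  have n1: "\<not> int l dvd (a mod (2*int l) + a)" using m(1) excl by blast
  have n2: "\<not> int l dvd ((-a) mod (2*int l) - a)" using m(2) excl by blast
  have n3: "\<not> int l dvd (b mod (2*int l) - a)" using m(3) excl by blast
  have n4: "\<not> int l dvd ((-b) mod (2*int l) + a)" using m(4) excl by blast
  show ?thesis using assms m n1 n2 n3 n4 unfolding sumS4 by auto
qed

lemma dvd_neg_iff: "(int l dvd (p::int)) = (int l dvd (-p))" by simp

lemma U_Pst: assumes s: "s = a \<or> s = -a"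
  shows "walk_U A {..<2*l} (Pst c s) = Pst (c + s) s"
proof (rule ext)
  fix e
  show "walk_U A {..<2*l} (Pst c s) e = Pst (c + s) s e"
  proof (cases "e \<in> A")
    case False then show ?thesis by (simp add: U_formula Pst_def)
  next
    case True
    obtain u v where e: "e = (u,v)" by (cases e)
    with True have uv: "(u,v) \<in> A" by simp
    then have vu: "(v,u) \<in> A" by (rule A_sym)
    have u: "u < 2*l" using uv by (simp add: A_iff)
    have tm: "Pst c s (src u t, u) = (if int l dvd (int u - c) then (1/4) * (if int l dvd (t - s) then 1 else 0) else 0)"
      if t: "t \<in> S" for t
    proof -
      have inA: "(src u t, u) \<in> A" using arc_in[OF t u] .
      have m: "(2*int l) dvd ((int u - int (src u t)) mod (2*int l) - (int u - int (src u t)))" by (rule mod_dvd)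
      then have m': "(2*int l) dvd (t - (int u - int (src u t)))" using src_back[OF t, of u] by simp
      have "int l dvd (t + (-s)) \<longleftrightarrow> int l dvd ((int u - int (src u t)) + (-s))"
        by (rule dvd_shift[OF m'])
      then have "int l dvd (t - s) \<longleftrightarrow> int l dvd (int u - int (src u t) - s)" by simp
      then show ?thesis using inA by (auto simp: Pst_def)
    qed
    have sum: "(\<Sum>t\<in>S. Pst c s (src u t, u)) = (if int l dvd (int u - c) then 1/2 else 0)"
    proof -
      have "(\<Sum>t\<in>S. Pst c s (src u t, u)) = (\<Sum>t\<in>S. (if int l dvd (int u - c) then (1/4) * (if int l dvd (t - s) then 1 else 0) else 0))"
        using tm by (rule sum.cong[OF refl])
      also have "\<dots> = (if int l dvd (int u - c) then (1/4) * (\<Sum>t\<in>S. (if int l dvd (t - s) then 1 else 0)) else 0)"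
        by (simp add: sum_distrib_left)
      also have "\<dots> = (if int l dvd (int u - c) then 1/2 else 0)" using cnt[OF s] by simp
      finally show ?thesis .
    qed
    have ad: "(int l dvd (int v - int u - a)) \<noteq> (int l dvd (int v - int u + a))" by (rule arc_diff[OF uv])
    have rev: "int l dvd (int u - int v - s) \<longleftrightarrow> \<not> int l dvd (int v - int u - s)"
    proof -
      have "int l dvd (int u - int v - s) \<longleftrightarrow> int l dvd (int v - int u + s)"
      proof -
        have "int v - int u + s = - (int u - int v - s)" by simp
        then show ?thesis by (metis dvd_minus_iff)
      qed
      then show ?thesis using s ad by auto
    qed
    have sh: "int l dvd (int v - int u - s) \<Longrightarrow> (int l dvd (int v - (c + s)) \<longleftrightarrow> int l dvd (int u - c))"
    proof -
      assume d: "int l dvd (int v - int u - s)"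
      have "int v - (c + s) = (int v - int u - s) + (int u - c)" by simp
      then show ?thesis using d by (metis dvd_add_right_iff)
    qed
    show ?thesis
      unfolding e U_formula using uv vu sum rev sh by (auto simp: Pst_def)
  qed
qed


definition ynode :: "nat \<Rightarrow> nat" where "ynode x = (x + l) mod (2*l)"

lemma ynode_lt: "ynode x < 2*l" using l2 by (simp add: ynode_def)

lemma ynode_ne: "x < 2*l \<Longrightarrow> ynode x \<noteq> x"
  using l2 by (auto simp: ynode_def mod_if split: if_splits)

lemma ynode_cases: "x < 2*l \<Longrightarrow> (x + l < 2*l \<and> ynode x = x + l) \<or> (x \<ge> l \<and> ynode x + l = x)"
  using l2 by (auto simp: ynode_def mod_if)

lemma ynode_dvdN: "x < 2*l \<Longrightarrow> (2*int l) dvd (int (ynode x) - int x - int l)"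
proof -
  assume x: "x < 2*l"
  from ynode_cases[OF x] show ?thesis
  proof
    assume "x + l < 2*l \<and> ynode x = x + l" then show ?thesis by simp
  next
    assume h: "x \<ge> l \<and> ynode x + l = x"
    then have "int (ynode x) - int x - int l = (2*int l) * (-1)" by linarith
    then show ?thesis by (metis dvd_triv_left)
  qed
qed

lemma congL: assumes x: "x < 2*l" and v: "v < 2*l"
  shows "int l dvd (int v - int x) \<longleftrightarrow> v = x \<or> v = ynode x"
proof
  assume "int l dvd (int v - int x)"
  then obtain k where k: "int v - int x = int l * k" by (auto simp: dvd_def)
  have Lp: "int l > 0" using l2 by simp
  have k1: "k < 2"
  proof (rule ccontr)
    assume "\<not> k < 2"
    then have "int l * 2 \<le> int l * k" using Lp by (intro mult_left_mono) auto
    then show False using k x v by linarith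
  qed
  have k2: "k > -2"
  proof (rule ccontr)
    assume "\<not> k > -2"
    then have "int l * k \<le> int l * (-2)" using Lp by (intro mult_left_mono) auto
    then show False using k x v by linarith
  qed
  then consider "k = 0" | "k = 1" | "k = -1" using k1 by linarith
  then show "v = x \<or> v = ynode x"
  proof cases
    case 1 then show ?thesis using k by simp
  next
    case 2 then have "int v = int x + int l" using k by simp
    then show ?thesis using ynode_cases[OF x] v by auto
  next
    case 3 then have "int v + int l = int x" using k by simp
    then show ?thesis using ynode_cases[OF x] v by auto
  qed
next
  assume "v = x \<or> v = ynode x"
  then show "int l dvd (int v - int x)"
  proof
    assume vy: "v = ynode x"
    from ynode_cases[OF x] show ?thesis
    proof
      assume "x + l < 2*l \<and> ynode x = x + l" then show ?thesis using vy by simp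
    next
      assume "l \<le> x \<and> ynode x + l = x"
      then have "int v - int x = - int l" using vy by linarith
      then show ?thesis by simp
    qed
  qed simp
qed

definition psi :: "nat \<Rightarrow> nat \<times> nat \<Rightarrow> complex" where
  "psi x e = (if e \<in> A then (if snd e = x then 1/4 else if snd e = ynode x then -1/4 else 0) else 0)"

definition psi1 :: "nat \<Rightarrow> nat \<times> nat \<Rightarrow> complex" where
  "psi1 x e = (if e \<in> A then (if fst e = x then 1/4 else if fst e = ynode x then -1/4 else 0) else 0)"

lemma U_psi: "walk_U A {..<2*l} (psi x) = psi1 x"
proof (rule ext)
  fix e
  show "walk_U A {..<2*l} (psi x) e = psi1 x e"
  proof (cases "e \<in> A")
    case False then show ?thesis by (simp add: U_formula psi1_def)
  next
    case True
    obtain u v where e: "e = (u,v)" by (cases e)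
    with True have uv: "(u,v) \<in> A" by simp
    then have vu: "(v,u) \<in> A" by (rule A_sym)
    have u: "u < 2*l" using uv by (simp add: A_iff)
    define c :: complex where "c = (if u = x then 1/4 else if u = ynode x then -1/4 else 0)"
    have "(\<Sum>t\<in>S. psi x (src u t, u)) = (\<Sum>t\<in>S. c)"
      by (rule sum.cong[OF refl]) (simp add: psi_def c_def arc_in[OF _ u])
    also have "\<dots> = 4 * c" using card4 by simp
    finally have "(\<Sum>t\<in>S. psi x (src u t, u)) = 4 * c" .
    moreover have "psi x (v,u) = c" using vu by (simp add: psi_def c_def)
    moreover have "psi1 x (u,v) = c" using uv by (simp add: psi1_def c_def)
    ultimately show ?thesis unfolding e U_formula using uv by simp
  qed
qed

lemma src_eq_iff: "z < 2*l \<Longrightarrow> src u t = z \<longleftrightarrow> (2*int l) dvd (int u - t - int z)"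
proof -
  assume z: "z < 2*l"
  have "src u t = z \<longleftrightarrow> int (src u t) = int z" by simp
  also have "\<dots> \<longleftrightarrow> (int u - t) mod (2*int l) = int z mod (2*int l)" using z by (simp add: src_int)
  also have "\<dots> \<longleftrightarrow> (2*int l) dvd (int u - t - int z)" by (rule mod_eq_dvd_iff)
  finally show ?thesis .
qed

lemma src_pair: assumes z: "z < 2*l" and z': "z' < 2*l" and d: "(2*int l) dvd (t + int z - t' - int z')"
  shows "src u t = z \<longleftrightarrow> src u t' = z'"
proof -
  have "int u - t' - int z' = (int u - t - int z) + (t + int z - t' - int z')" by simp
  then have "(2*int l) dvd (int u - t - int z) \<longleftrightarrow> (2*int l) dvd (int u - t' - int z')"
    using d by (metis dvd_add_left_iff)
  then show ?thesis using src_eq_iff[OF z] src_eq_iff[OF z'] by simp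
qed

lemma U_psi1: assumes x: "x < 2*l" shows "walk_U A {..<2*l} (psi1 x) = (\<lambda>e. - psi x e)"
proof (rule ext)
  fix e
  show "walk_U A {..<2*l} (psi1 x) e = - psi x e"
  proof (cases "e \<in> A")
    case False then show ?thesis by (simp add: U_formula psi_def)
  next
    case True
    obtain u v where e: "e = (u,v)" by (cases e)
    with True have uv: "(u,v) \<in> A" by simp
    then have vu: "(v,u) \<in> A" by (rule A_sym)
    have u: "u < 2*l" using uv by (simp add: A_iff)
    define y where "y = ynode x"
    have y: "y < 2*l" "y \<noteq> x" using ynode_lt ynode_ne[OF x] by (auto simp: y_def)
    have Ny: "(2*int l) dvd (int y - int x - int l)" using ynode_dvdN[OF x] by (simp add: y_def)
    define N where "N = 2 * int l"
    have NN: "N dvd N" by simp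
    have m1: "N dvd (a mod N - a)" "N dvd ((-a) mod N + a)" "N dvd (b mod N - b)" "N dvd ((-b) mod N + b)"
      using mod_dvd[of N a] mod_dvd[of N "-a"] mod_dvd[of N b] mod_dvd[of N "-b"] by simp_all
    have ab'': "N dvd (a + b - int l)" using ab' by (simp add: N_def)
    have Ny': "N dvd (int y - int x - int l)" using Ny by (simp add: N_def)
    have p1: "src u (a mod N) = y \<longleftrightarrow> src u ((-b) mod N) = x"
    proof (rule src_pair[OF y(1) x])
      have "a mod N + int y - (-b) mod N - int x = (a mod N - a) + (int y - int x - int l) - ((-b) mod N + b) + (a + b - int l) + N"
        by (simp add: N_def)
      then show "(2*int l) dvd (a mod N + int y - (-b) mod N - int x)"
        using m1 ab'' Ny' NN unfolding N_def[symmetric] by (metis dvd_add dvd_diff)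
    qed
    have p2: "src u ((-a) mod N) = y \<longleftrightarrow> src u (b mod N) = x"
    proof (rule src_pair[OF y(1) x])
      have "(-a) mod N + int y - b mod N - int x = ((-a) mod N + a) + (int y - int x - int l) - (b mod N - b) - (a + b - int l)"
        by (simp add: N_def)
      then show "(2*int l) dvd ((-a) mod N + int y - b mod N - int x)"
        using m1 ab'' Ny' NN unfolding N_def[symmetric] by (metis dvd_add dvd_diff)
    qed
    have p3: "src u (b mod N) = y \<longleftrightarrow> src u ((-a) mod N) = x"
    proof (rule src_pair[OF y(1) x])
      have "b mod N + int y - (-a) mod N - int x = (b mod N - b) + (int y - int x - int l) - ((-a) mod N + a) + (a + b - int l) + N"
        by (simp add: N_def)
      then show "(2*int l) dvd (b mod N + int y - (-a) mod N - int x)"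
        using m1 ab'' Ny' NN unfolding N_def[symmetric] by (metis dvd_add dvd_diff)
    qed
    have p4: "src u ((-b) mod N) = y \<longleftrightarrow> src u (a mod N) = x"
    proof (rule src_pair[OF y(1) x])
      have "(-b) mod N + int y - a mod N - int x = ((-b) mod N + b) + (int y - int x - int l) - (a mod N - a) - (a + b - int l)"
        by (simp add: N_def)
      then show "(2*int l) dvd ((-b) mod N + int y - a mod N - int x)"
        using m1 ab'' Ny' NN unfolding N_def[symmetric] by (metis dvd_add dvd_diff)
    qed
    have "(\<Sum>t\<in>S. psi1 x (src u t, u)) = (\<Sum>t\<in>S. (if src u t = x then 1/4 else if src u t = y then -1/4 else 0))"
      by (rule sum.cong[OF refl]) (simp add: psi1_def y_def arc_in[OF _ u])
    also have "\<dots> = 0"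
      unfolding sumS4 N_def[symmetric] using p1 p2 p3 p4 y(2) by auto
    finally have "(\<Sum>t\<in>S. psi1 x (src u t, u)) = 0" .
    moreover have "psi1 x (v,u) = psi x (u,v)" using vu uv by (simp add: psi1_def psi_def)
    ultimately show ?thesis unfolding e U_formula using uv by simp
  qed
qed

lemma dstar_eq: "z < 2*l \<Longrightarrow> dstar_e A z e = (if e \<in> A \<and> snd e = z then 1/2 else 0)"
  by (simp add: dstar_e_def bd_eq)

lemma Pst_sum: assumes x: "x < 2*l"
  shows "Pst (int x) a e + Pst (int x) (-a) e = (if e \<in> A \<and> (snd e = x \<or> snd e = ynode x) then 1/4 else 0)"
proof (cases "e \<in> A")
  case False then show ?thesis by (simp add: Pst_def)
next
  case True
  obtain u v where e: "e = (u,v)" by (cases e)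
  with True have uv: "(u,v) \<in> A" by simp
  have v: "v < 2*l" using uv by (simp add: A_iff)
  have ad: "(int l dvd (int v - int u - a)) \<noteq> (int l dvd (int v - int u + a))" by (rule arc_diff[OF uv])
  show ?thesis using uv ad congL[OF x v] unfolding e Pst_def by auto
qed

lemma dstar_x: assumes x: "x < 2*l"
  shows "dstar_e A x = (\<lambda>e. Pst (int x) a e + Pst (int x) (-a) e + psi x e)"
proof (rule ext)
  fix e show "dstar_e A x e = Pst (int x) a e + Pst (int x) (-a) e + psi x e"
    unfolding Pst_sum[OF x] dstar_eq[OF x] psi_def using ynode_ne[OF x] by auto
qed

lemma dstar_y: assumes x: "x < 2*l"
  shows "dstar_e A (ynode x) = (\<lambda>e. Pst (int x) a e + Pst (int x) (-a) e - psi x e)"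
proof (rule ext)
  fix e show "dstar_e A (ynode x) e = Pst (int x) a e + Pst (int x) (-a) e - psi x e"
    unfolding Pst_sum[OF x] dstar_eq[OF ynode_lt] psi_def using ynode_ne[OF x] by auto
qed


definition Phi :: "nat \<Rightarrow> nat \<Rightarrow> nat \<times> nat \<Rightarrow> complex" where
  "Phi x n = (\<lambda>e. Pst (int x + int n * a) a e + Pst (int x - int n * a) (-a) e
      + (-1) ^ (n div 2) * (if even n then psi x else psi1 x) e)"

lemma UPa: "walk_U A {..<2*l} (Pst c a) = Pst (c + a) a" by (rule U_Pst) simp
lemma UPma: "walk_U A {..<2*l} (Pst c (-a)) = Pst (c + - a) (-a)" by (rule U_Pst) simp

lemma iter: assumes x: "x < 2*l"
  shows "(walk_U A {..<2*l} ^^ n) (dstar_e A x) = Phi x n"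
proof (induction n)
  case 0 show ?case by (simp add: Phi_def dstar_x[OF x])
next
  case (Suc n)
  have "(walk_U A {..<2*l} ^^ Suc n) (dstar_e A x) = walk_U A {..<2*l} (Phi x n)" using Suc by simp
  also have "\<dots> = (\<lambda>e. Pst (int x + int n * a + a) a e + Pst (int x - int n * a + - a) (-a) e
      + (-1) ^ (n div 2) * walk_U A {..<2*l} (if even n then psi x else psi1 x) e)"
    unfolding Phi_def by (simp only: lin_add lin_scale UPa UPma)
  also have "\<dots> = Phi x (Suc n)"
  proof -
    have e1: "int x + int n * a + a = int x + int (Suc n) * a" by (simp add: algebra_simps)
    have e2: "int x - int n * a + - a = int x - int (Suc n) * a" by (simp add: algebra_simps)
    show ?thesis
    proof (cases "even n")
      case True
      then have d: "Suc n div 2 = n div 2" by presburger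
      have H: "walk_U A {..<2*l} (if even n then psi x else psi1 x) = psi1 x" using True U_psi by simp
      show ?thesis unfolding Phi_def e1 e2 H d using True by simp
    next
      case False
      then have d: "Suc n div 2 = Suc (n div 2)" by presburger
      have H: "walk_U A {..<2*l} (if even n then psi x else psi1 x) = (\<lambda>e. - psi x e)" using False U_psi1[OF x] by simp
      show ?thesis unfolding Phi_def e1 e2 H d using False by simp
    qed
  qed
  finally show ?case .
qed

lemma Pst_cong: assumes d: "int l dvd (c - c')" shows "Pst c s = Pst c' s"
proof (rule ext)
  fix e :: "nat \<times> nat"
  have "int (snd e) - c' = (int (snd e) - c) + (c - c')" by simp
  then have "int l dvd (int (snd e) - c) \<longleftrightarrow> int l dvd (int (snd e) - c')" using d by (metis dvd_add_left_iff)
  then show "Pst c s e = Pst c' s e" by (simp add: Pst_def)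
qed

lemma aS: "a mod (2*int l) \<in> S" by (simp add: S_eq)

lemma pst_main: assumes x: "x < 2*l" and ev: "even \<tau>" and od: "odd (\<tau> div 2)" and d: "l dvd \<tau>" and t1: "\<tau> \<ge> 1"
  shows "pst A {..<2*l} (dstar_e A x) (dstar_e A (ynode x)) \<tau>"
proof -
  have Ld: "int l dvd int \<tau> * a" using d by simp
  have c1: "Pst (int x + int \<tau> * a) a = Pst (int x) a" by (rule Pst_cong) (simp add: Ld)
  have c2: "Pst (int x - int \<tau> * a) (-a) = Pst (int x) (-a)" by (rule Pst_cong) (use Ld in simp)
  have sg: "(-1::complex) ^ (\<tau> div 2) = -1" using od by simp
  have "(walk_U A {..<2*l} ^^ \<tau>) (dstar_e A x) = dstar_e A (ynode x)"
    unfolding iter[OF x] dstar_y[OF x] Phi_def c1 c2 sg using ev by simp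
  moreover have "dstar_e A x \<noteq> dstar_e A (ynode x)"
  proof
    assume h: "dstar_e A x = dstar_e A (ynode x)"
    have "(src x (a mod (2*int l)), x) \<in> A" by (rule arc_in[OF aS x])
    then have "dstar_e A x (src x (a mod (2*int l)), x) = 1/2" "dstar_e A (ynode x) (src x (a mod (2*int l)), x) = 0"
      using ynode_ne[OF x] by (auto simp: dstar_eq[OF x] dstar_eq[OF ynode_lt])
    then show False using h by simp
  qed
  ultimately show ?thesis using t1 unfolding pst_def by (intro conjI exI[of _ 1]) auto
qed


lemma no_pst: assumes x: "x < 2*l" and cop: "coprime (int l) a"
  and nd: "\<not> (even \<tau> \<and> l dvd \<tau>)"
  shows "\<not> pst A {..<2*l} (dstar_e A x) (dstar_e A (ynode x)) \<tau>"
proof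
  assume "pst A {..<2*l} (dstar_e A x) (dstar_e A (ynode x)) \<tau>"
  then obtain \<gamma> where g: "cmod \<gamma> = 1" and eq: "Phi x \<tau> = (\<lambda>e. \<gamma> * dstar_e A (ynode x) e)"
    unfolding pst_def iter[OF x] by blast
  define y where "y = ynode x"
  define a' where "a' = a mod (2*int l)"
  define w where "w = src y a'"
  have y: "y < 2*l" "y \<noteq> x" using ynode_lt ynode_ne[OF x] by (auto simp: y_def)
  have a'S: "a' \<in> S" using aS by (simp add: a'_def)
  have e1A: "(w, y) \<in> A" unfolding w_def by (rule arc_in[OF a'S y(1)])
  have bk: "(int y - int w) mod (2*int l) = a'" unfolding w_def by (rule src_back[OF a'S])
  have NL: "int l dvd (2*int l)" by simp
  have m: "int l dvd ((int y - int w) mod (2*int l) - (int y - int w))"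
    using mod_dvd[of "2*int l" "int y - int w"] NL dvd_trans by blast
  have d1: "int l dvd (int y - int w - a)"
  proof -
    have "int y - int w - a = (a' - a) - (a' - (int y - int w))" by simp
    moreover have "int l dvd (a' - a)" using modfacts(1) by (simp add: a'_def)
    ultimately show ?thesis using m bk by (metis dvd_diff)
  qed
  have yx: "int l dvd (int y - int x)" using congL[OF x y(1)] by (simp add: y_def)
  have P2: "Pst (int x - int \<tau> * a) (-a) (w, y) = 0"
    using d1 excl[of "int y - int w"] by (auto simp: Pst_def)
  have P1: "Pst (int x + int \<tau> * a) a (w, y) = 0 \<or> (Pst (int x + int \<tau> * a) a (w, y) = 1/4 \<and> l dvd \<tau>)"
  proof (cases "int l dvd (int y - (int x + int \<tau> * a))")
    case True
    have "int \<tau> * a = (int y - int x) - (int y - (int x + int \<tau> * a))" by simp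
    then have "int l dvd int \<tau> * a" using True yx by (metis dvd_diff)
    then have "int l dvd int \<tau>" using coprime_dvd_mult_left_iff[OF cop] by blast
    then have "l dvd \<tau>" by simp
    then show ?thesis by (simp add: Pst_def)
  next
    case False then show ?thesis by (simp add: Pst_def)
  qed
  have H0: "psi1 x (w, y) = 0"
  proof -
    have "w \<noteq> y"
    proof
      assume "w = y"
      then have "a' = 0" using bk by simp
      then show False using a'S zS by simp
    qed
    moreover have "w \<noteq> x"
    proof
      assume "w = x"
      then have "int l dvd (int y - int x) - (int y - int w - a)" using yx d1 by (metis dvd_diff)
      then have "int l dvd a" using \<open>w = x\<close> by simp
      then have "int l dvd 2 * a" by simp
      then show False using not_dvd2a by simp
    qed
    ultimately show ?thesis by (simp add: psi1_def y_def)
  qed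
  have Hm: "psi x (w, y) = -1/4" using e1A y by (simp add: psi_def y_def)
  have rhs: "cmod (Phi x \<tau> (w, y)) = 1/2"
  proof -
    have "Phi x \<tau> (w, y) = \<gamma> * dstar_e A y (w, y)" using eq by (simp add: y_def fun_eq_iff)
    also have "\<dots> = \<gamma> / 2" using e1A by (simp add: dstar_eq[OF y(1)])
    finally have ph: "Phi x \<tau> (w, y) = \<gamma> / 2" .
    have "cmod (\<gamma> / 2) = 1/2" using g by (simp add: norm_divide)
    then show ?thesis unfolding ph .
  qed
  show False
  proof (cases "even \<tau>")
    case True
    then have "\<not> l dvd \<tau>" using nd by simp
    then have "Pst (int x + int \<tau> * a) a (w, y) = 0" using P1 by auto
    then have "Phi x \<tau> (w, y) = (-1) ^ (\<tau> div 2) * (-1/4)" using P2 Hm True by (simp add: Phi_def)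
    then have "cmod (Phi x \<tau> (w, y)) = 1/4" by (simp add: norm_mult norm_power)
    then show False using rhs by simp
  next
    case False
    then have "Phi x \<tau> (w, y) = Pst (int x + int \<tau> * a) a (w, y)" using P2 H0 by (simp add: Phi_def)
    then have "cmod (Pst (int x + int \<tau> * a) a (w, y)) = 1/2" using rhs by simp
    moreover have "cmod (Pst (int x + int \<tau> * a) a (w, y)) \<le> 1/4"
    proof -
      have q: "cmod (1/4::complex) = 1/4" by (simp add: norm_divide)
      from P1 show ?thesis
      proof (elim disjE conjE)
        assume "Pst (int x + int \<tau> * a) a (w, y) = 0" then show ?thesis by simp
      next
        assume h: "Pst (int x + int \<tau> * a) a (w, y) = 1/4" show ?thesis unfolding h q by simp
      qed
    qed
    ultimately show False by simp
  qed
qed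

lemma conn_coprime: assumes c: "graph_connected A {..<2*l}" shows "coprime (int l) a"
proof -
  define g where "g = gcd a (int l)"
  have ga: "g dvd a" and gl: "g dvd int l" by (simp_all add: g_def)
  have gN: "g dvd 2 * int l" using gl by simp
  have gb: "g dvd b"
  proof -
    have "g dvd (a + b - int l)" using ab' gN dvd_trans by blast
    moreover have "b = (a + b - int l) - a + int l" by simp
    ultimately show ?thesis using ga gl by (metis dvd_add dvd_diff)
  qed
  have gS: "g dvd s" if "s \<in> S" for s
  proof -
    from S_cases[OF that] show ?thesis
    proof (elim disjE)
      assume "(2*int l) dvd (s - a)"
      then have "g dvd (s - a)" using gN dvd_trans by blast
      moreover have "s = (s - a) + a" by simp
      ultimately show ?thesis using ga by (metis dvd_add)
    next
      assume "(2*int l) dvd (s + a)"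
      then have "g dvd (s + a)" using gN dvd_trans by blast
      moreover have "s = (s + a) - a" by simp
      ultimately show ?thesis using ga by (metis dvd_diff)
    next
      assume "(2*int l) dvd (s - b)"
      then have "g dvd (s - b)" using gN dvd_trans by blast
      moreover have "s = (s - b) + b" by simp
      ultimately show ?thesis using gb by (metis dvd_add)
    next
      assume "(2*int l) dvd (s + b)"
      then have "g dvd (s + b)" using gN dvd_trans by blast
      moreover have "s = (s + b) - b" by simp
      ultimately show ?thesis using gb by (metis dvd_diff)
    qed
  qed
  have inv: "g dvd (int q - int p)" if "(p, q) \<in> A\<^sup>*" for p q
    using that
  proof (induction rule: rtrancl_induct)
    case base then show ?case by simp
  next
    case (step q r)
    then have s: "(int r - int q) mod (2*int l) \<in> S" by (simp add: A_iff)
    have "g dvd (int r - int q) mod (2*int l) - (int r - int q)"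
      using mod_dvd[of "2*int l" "int r - int q"] gN dvd_trans by blast
    moreover have "int r - int q = (int r - int q) mod (2*int l) - ((int r - int q) mod (2*int l) - (int r - int q))" by simp
    ultimately have "g dvd (int r - int q)" using gS[OF s] by (metis dvd_diff)
    moreover have "int r - int p = (int r - int q) + (int q - int p)" by simp
    ultimately show ?case using step.IH by (metis dvd_add)
  qed
  have "(0, 1) \<in> A\<^sup>*" using c l2 unfolding graph_connected_def by auto
  then have "g dvd 1" using inv by fastforce
  then have "g = 1" using g_def by simp
  then show ?thesis by (simp add: g_def coprime_iff_gcd_eq_1 gcd.commute)
qed

end

theorem lemma8p1:
  fixes l :: nat and a b :: int
  defines "S \<equiv> (\<lambda>t. t mod int (2 * l)) ` {a, - a, b, - b}"
  defines "A \<equiv> circ_arcs (2 * l) S"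
  assumes "l \<ge> 2"
    and "card S = 4" and "0 \<notin> S"
    and "(a + b) mod int (2 * l) = int l"
    and "\<not> 4 dvd l"
  shows "(l mod 4 = 2 \<longrightarrow>
            (\<forall>x < 2 * l. pst A {..<2 * l} (dstar_e A x) (dstar_e A ((x + l) mod (2 * l))) l))
       \<and> (odd l \<longrightarrow>
            (\<forall>x < 2 * l. pst A {..<2 * l} (dstar_e A x) (dstar_e A ((x + l) mod (2 * l))) (2 * l)))
       \<and> (graph_connected A {..<2 * l} \<longrightarrow>
            (l mod 4 = 2 \<longrightarrow> (\<forall>x < 2 * l. \<forall>\<tau>. 1 \<le> \<tau> \<and> \<tau> < l \<longrightarrow>
                 \<not> pst A {..<2 * l} (dstar_e A x) (dstar_e A ((x + l) mod (2 * l))) \<tau>))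
          \<and> (odd l \<longrightarrow> (\<forall>x < 2 * l. \<forall>\<tau>. 1 \<le> \<tau> \<and> \<tau> < 2 * l \<longrightarrow>
                 \<not> pst A {..<2 * l} (dstar_e A x) (dstar_e A ((x + l) mod (2 * l))) \<tau>)))"
proof -
  have "W l a b S A"
  proof (rule W.intro)
    show "S = (\<lambda>t. t mod int (2*l)) ` {a, - a, b, - b}" unfolding S_def by (rule refl)
    show "A = circ_arcs (2*l) S" unfolding A_def by (rule refl)
  qed (rule assms)+
  then interpret W l a b S A .
  have yn: "\<And>x. (x + l) mod (2*l) = ynode x" by (simp add: ynode_def)
  have P1: "pst A {..<2 * l} (dstar_e A x) (dstar_e A (ynode x)) l" if "l mod 4 = 2" "x < 2*l" for x
  proof (rule pst_main[OF that(2)])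
    show "even l" "odd (l div 2)" using that(1) by presburger+
    show "l dvd l" by simp
    show "l \<ge> 1" using l2 by simp
  qed
  have P2: "pst A {..<2 * l} (dstar_e A x) (dstar_e A (ynode x)) (2*l)" if "odd l" "x < 2*l" for x
  proof (rule pst_main[OF that(2)])
    show "even (2*l)" by simp
    show "odd (2*l div 2)" using that(1) by simp
    show "l dvd 2*l" by simp
    show "2*l \<ge> 1" using l2 by simp
  qed
  have M: "\<not> pst A {..<2 * l} (dstar_e A x) (dstar_e A (ynode x)) \<tau>"
    if c: "graph_connected A {..<2 * l}" and x: "x < 2*l" and t: "1 \<le> \<tau>"
      and h: "(l mod 4 = 2 \<and> \<tau> < l) \<or> (odd l \<and> \<tau> < 2*l)" for x \<tau>
  proof (rule no_pst[OF x conn_coprime[OF c]])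
    show "\<not> (even \<tau> \<and> l dvd \<tau>)"
    proof
      assume e: "even \<tau> \<and> l dvd \<tau>"
      then obtain k where k: "\<tau> = l * k" by blast
      have "k \<noteq> 0" using k t by auto
      from h show False
      proof
        assume "l mod 4 = 2 \<and> \<tau> < l"
        then have "l * k < l * 1" using k by simp
        then have "k < 1" by (meson nat_mult_less_cancel_disj)
        then show False using \<open>k \<noteq> 0\<close> by simp
      next
        assume o: "odd l \<and> \<tau> < 2*l"
        then have "l * k < l * 2" using k by (simp add: mult.commute)
        then have "k < 2" by (meson nat_mult_less_cancel_disj)
        then have "k = 1" using \<open>k \<noteq> 0\<close> by simp
        then show False using k o e by simp
      qed
    qed
  qed
  show ?thesis unfolding yn using P1 P2 M by blast
qed

end
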